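(* Let $f(z)=\sum_{j\ge0}\binom{2j}{j}\left(\sum_{k=0}^{j}\binom{j}{k}^2\binom{j+k}{k}\binom{2k}{j}\right)z^j\in1+z\mathbb{Z}[[z]]$. Then for every prime $p$ one has $\Lambda_p(f_{|p})=f_{|p}$, and there is a finite set $\mathcal{J}$ of primes such that $f\in\mathcal{L}(\mathcal{P}\setminus\mathcal{J})$, where $\mathcal{P}$ is the set of all primes.
   Context: For a prime $p$, $\mathbb{Z}_{(p)}$ is the localization of $\mathbb{Z}$ at $(p)$; for $f=\sum a(n)z^n\in\mathbb{Z}_{(p)}[[z]]$, $f_{|p}(z)=\sum (a(n)\bmod p)z^n$; $\Lambda_p(\sum a(n)z^n)=\sum a(np)z^n$. The height of a rational function $P/Q$ with $P,Q$ coprime polynomials is $\max(\deg P,\deg Q)$. For an infinite set $\mathcal{S}$ of primes, $\mathcal{L}(\mathcal{S})$ is the set of $f\in 1+z\mathbb{Q}[[z]]$ such that there is a constant $C>0$ independent of $p$ with: for every $p\in\mathcal{S}$, $f\in\mathbb{Z}_{(p)}[[z]]$, and there exist an integer $l_p>0$ and $A_p\in\mathbb{F}_p(z)\cap\mathbb{F}_p[[z]]$ with $f_{|p}(z)=A_p(z)f_{|p}(z^{p^{l_p}})$ and height of $A_p$ at most $Cp^{l_p}$. *)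

theory Defs
  imports "HOL-Computational_Algebra.Computational_Algebra"
begin

text \<open>Elements of F_p are represented by integers, reduction mod p by int mod.
  Power series / polynomials over F_p are represented by integer ones, compared
  after coefficientwise reduction mod p.\<close>

definition fps_red :: "nat \<Rightarrow> int fps \<Rightarrow> int fps" where
  "fps_red p F = Abs_fps (\<lambda>n. fps_nth F n mod int p)"

definition poly_red :: "nat \<Rightarrow> int poly \<Rightarrow> int poly" where
  "poly_red p P = map_poly (\<lambda>c. c mod int p) P"

definition Lambda_op :: "nat \<Rightarrow> 'a fps \<Rightarrow> 'a fps" where
  "Lambda_op p F = Abs_fps (\<lambda>n. fps_nth F (n * p))"

definition subst_pow :: "nat \<Rightarrow> 'a::zero fps \<Rightarrow> 'a fps" where
  "subst_pow q F = Abs_fps (\<lambda>n. if q dvd n then fps_nth F (n div q) else 0)"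

definition dvd_mod :: "nat \<Rightarrow> int poly \<Rightarrow> int poly \<Rightarrow> bool" where
  "dvd_mod p D P \<longleftrightarrow> (\<exists>R. poly_red p (D * R) = poly_red p P)"

definition unit_mod :: "nat \<Rightarrow> int poly \<Rightarrow> bool" where
  "unit_mod p D \<longleftrightarrow> poly_red p D \<noteq> 0 \<and> degree (poly_red p D) = 0"

definition coprime_mod :: "nat \<Rightarrow> int poly \<Rightarrow> int poly \<Rightarrow> bool" where
  "coprime_mod p P Q \<longleftrightarrow>
     (\<forall>D. dvd_mod p D P \<and> dvd_mod p D Q \<longrightarrow> unit_mod p D)"

text \<open>The class L(S), for series with integer coefficients (so membership in
  Z_(p)[[z]] is automatic).  A_p = P/Q with P, Q coprime in F_p[z], Q nonzero,
  A_p lying in F_p[[z]] (witnessed by the series A with Q*A = P in F_p[[z]]),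
  and height(A_p) = max(deg P, deg Q).\<close>
definition in_L :: "nat set \<Rightarrow> int fps \<Rightarrow> bool" where
  "in_L S f \<longleftrightarrow> fps_nth f 0 = 1 \<and>
     (\<exists>C::real. C > 0 \<and> (\<forall>p\<in>S. \<exists>l::nat. l > 0 \<and>
        (\<exists>P Q :: int poly. \<exists>A :: int fps.
           poly_red p Q \<noteq> 0 \<and> coprime_mod p P Q \<and>
           fps_red p (fps_of_poly Q * A) = fps_red p (fps_of_poly P) \<and>
           fps_red p f = fps_red p (A * subst_pow (p ^ l) f) \<and>
           real (max (degree (poly_red p P)) (degree (poly_red p Q))) \<le> C * real p ^ l)))"

definition coeff_a :: "nat \<Rightarrow> int" where
  "coeff_a j = int (2*j choose j) *
     (\<Sum>k=0..j. int ((j choose k)^2 * ((j+k) choose k) * ((2*k) choose j)))"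

definition f20 :: "int fps" where
  "f20 = Abs_fps coeff_a"

end

theory Submission
  imports Defs
begin

lemma dm: "(b::nat) < p \<Longrightarrow> (b + a*p) div p = a \<and> (b + a*p) mod p = b"
  by simp

lemma lucas:
  fixes p :: nat assumes p: "prime p"
  shows "(N choose K) mod p = ((N div p choose K div p) * (N mod p choose K mod p)) mod p"
proof (induction N arbitrary: K)
  case 0
  have "K = K div p * p + K mod p" by simp
  then have "K \<noteq> 0 \<Longrightarrow> K div p \<noteq> 0 \<or> K mod p \<noteq> 0" by (metis add_0 mult_zero_left)
  then show ?case by (cases "K = 0") (auto simp: binomial_eq_0)
next
  case (Suc N)
  have p1: "p > 1" using p prime_gt_1_nat by blast
  show ?case
  proof (cases K)
    case 0 then show ?thesis by simp
  next
    case (Suc K')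
    define n r m s where "n = N div p" and "r = N mod p" and "m = K' div p" and "s = K' mod p"
    have N: "N = n*p+r" and K': "K' = m*p+s" and rp: "r<p" and sp: "s<p"
      using p1 by (auto simp: n_def r_def m_def s_def)
    have "(Suc N choose K) mod p = ((N choose K') mod p + (N choose Suc K') mod p) mod p"
      using Suc by (simp add: mod_add_eq)
    also have "\<dots> = ((N div p choose K' div p) * (N mod p choose K' mod p)
        + (N div p choose Suc K' div p) * (N mod p choose Suc K' mod p)) mod p"
      using Suc.IH[of K'] Suc.IH[of "Suc K'"] by (simp add: mod_add_eq)
    also have "\<dots> = ((Suc N div p choose K div p) * (Suc N mod p choose K mod p)) mod p"
    proof (cases "Suc r < p")
      case True
      have e: "Suc N = Suc r + n * p" using N by simp
      have SN: "Suc N div p = n" "Suc N mod p = Suc r" unfolding e using dm[OF True] by blast+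
      show ?thesis
      proof (cases "Suc s < p")
        case True
        have e2: "Suc K' = Suc s + m * p" using K' by simp
        have "Suc K' div p = m" "Suc K' mod p = Suc s" unfolding e2 using dm[OF True] by blast+
        then show ?thesis using SN Suc K' sp N rp by (simp add: algebra_simps)
      next
        case False
        then have sq: "Suc s = p" using sp by auto
        have "Suc K' = (Suc m)*p" using K' sq by simp
        then have "Suc K' div p = Suc m" "Suc K' mod p = 0" using p1 by auto
        moreover have "(r choose s) = 0" using True sq by simp
        ultimately show ?thesis using SN Suc K' sp N rp by (simp add: binomial_eq_0)
      qed
    next
      case False
      then have rq: "Suc r = p" using rp by auto
      have "Suc N = (Suc n)*p" using N rq by simp
      then have SN: "Suc N div p = Suc n" "Suc N mod p = 0" using p1 by auto
      show ?thesis
      proof (cases "Suc s < p")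
        case True
        have e2: "Suc K' = Suc s + m * p" using K' by simp
        have KK: "Suc K' div p = m" "Suc K' mod p = Suc s" unfolding e2 using dm[OF True] by blast+
        have "p dvd (p choose Suc s)" using dvd_choose_prime[OF True] p by auto
        moreover have "(p choose Suc s) = (r choose s) + (r choose Suc s)" using rq[symmetric] by simp
        ultimately have "p dvd (n choose m) * ((r choose s) + (r choose Suc s))" by simp
        then show ?thesis using SN KK Suc K' sp N rp by (simp add: algebra_simps)
      next
        case False
        then have sq: "Suc s = p" using sp by auto
        have "Suc K' = (Suc m)*p" using K' sq by simp
        then have "Suc K' div p = Suc m" "Suc K' mod p = 0" using p1 by auto
        moreover have "s = r" using sq rq by simp
        ultimately show ?thesis using SN Suc K' sp N rp by simp
      qed
    qed
    finally show ?thesis .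
  qed
qed
lemma lucas2:
  fixes p :: nat assumes p: "prime p" and "r < p" "s < p"
  shows "(n*p+r choose m*p+s) mod p = ((n choose m)*(r choose s)) mod p"
proof -
  have "(n*p+r) div p = n" "(n*p+r) mod p = r" "(m*p+s) div p = m" "(m*p+s) mod p = s"
    using assms by auto
  then show ?thesis using lucas[OF p, of "n*p+r" "m*p+s"] by simp
qed

lemma lucas0:
  fixes p :: nat assumes p: "prime p" and "s < p" "N mod p < s"
  shows "(N choose s) mod p = 0"
  using lucas[OF p, of N s] assms by (simp add: binomial_eq_0)

definition T :: "nat \<Rightarrow> nat \<Rightarrow> nat" where
  "T j k = (j choose k)^2 * ((j+k) choose k) * ((2*k) choose j)"

definition S :: "nat \<Rightarrow> nat" where
  "S j = (\<Sum>k=0..j. T j k)"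

definition bb :: "nat \<Rightarrow> nat" where
  "bb j = (2*j choose j) * S j"

lemma T_cong:
  fixes p :: nat assumes p: "prime p" and rp: "r < p" and sp: "s < p"
  shows "T (n*p+r) (m*p+s) mod p = (T n m * T r s) mod p"
proof (cases "s \<le> r")
  case False
  have "(n*p+r choose m*p+s) mod p = 0" using lucas2[OF p rp sp, of n m] False
    by (simp add: binomial_eq_0)
  then have "p dvd (n*p+r choose m*p+s)" by auto
  then have "p dvd T (n*p+r) (m*p+s)" unfolding T_def by (simp add: power2_eq_square)
  moreover have "T r s = 0" using False unfolding T_def by (simp add: binomial_eq_0)
  ultimately show ?thesis by simp
next
  case True
  note sr = this
  show ?thesis
  proof (cases "r+s<p")
    case True
    have c1: "(n*p+r choose m*p+s) mod p = ((n choose m)*(r choose s)) mod p"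
      using lucas2[OF p rp sp] by simp
    have e2: "(n*p+r)+(m*p+s) = (n+m)*p + (r+s)" by (simp add: algebra_simps)
    have c2: "((n*p+r)+(m*p+s) choose m*p+s) mod p = ((n+m choose m)*(r+s choose s)) mod p"
      unfolding e2 using lucas2[OF p True sp] by simp
    have e3: "2*(m*p+s) = (2*m)*p + 2*s" by (simp add: algebra_simps)
    have c3: "(2*(m*p+s) choose n*p+r) mod p = ((2*m choose n)*(2*s choose r)) mod p"
      unfolding e3 using lucas2[OF p _ rp, of "2*s" "2*m" n] True sr by simp
    have "T (n*p+r) (m*p+s) mod p =
      (((n choose m)*(r choose s))^2 * ((n+m choose m)*(r+s choose s)) * ((2*m choose n)*(2*s choose r))) mod p"
      unfolding T_def
      by (intro mod_mult_cong c2 c3) (metis c1 power_mod)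
    also have "\<dots> = (T n m * T r s) mod p" unfolding T_def by (simp add: algebra_simps power2_eq_square)
    finally show ?thesis .
  next
    case False
    define t where "t = r + s - p"
    have tp: "t < p" "t < s" using rp sp False by (auto simp: t_def)
    have e2: "(n*p+r)+(m*p+s) = (n+m+1)*p + t" using False by (simp add: t_def algebra_simps)
    have z: "(t choose s) = 0" using tp by (simp add: binomial_eq_0)
    have "(((n+m+1)*p + t) choose m*p+s) mod p = 0" using lucas2[OF p tp(1) sp, of "n+m+1" m] z by simp
    then have "((n*p+r)+(m*p+s) choose m*p+s) mod p = 0"
      unfolding e2 .
    then have "p dvd ((n*p+r)+(m*p+s) choose m*p+s)" by auto
    then have d1: "p dvd T (n*p+r) (m*p+s)" unfolding T_def by simp
    have e4: "r + s = t + 1*p" using False by (simp add: t_def)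
    have "(r+s) mod p = t" unfolding e4 using dm[OF tp(1), of 1] by blast
    then have "(r+s choose s) mod p = 0"
      using lucas0[OF p sp, of "r+s"] tp by simp
    then have "p dvd T r s" unfolding T_def by auto
    with d1 show ?thesis by auto
  qed
qed

lemma sum_mod_cong:
  fixes p :: nat
  assumes "\<And>i. i \<in> A \<Longrightarrow> f i mod p = g i mod p"
  shows "sum f A mod p = sum g A mod p"
  by (metis (no_types, lifting) assms mod_sum_eq sum.cong)

lemma S_ext: "j < L \<Longrightarrow> S j = (\<Sum>k<L. T j k)"
  unfolding S_def
  by (rule sum.mono_neutral_left) (auto simp: T_def binomial_eq_0)

lemma S_cong:
  fixes p :: nat assumes p: "prime p" and rp: "r < p"
  shows "S (n*p+r) mod p = (S n * S r) mod p"
proof -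
  let ?j = "n*p+r"
  have "S ?j = (\<Sum>k<Suc n * p. T ?j k)" using rp by (intro S_ext) simp
  also have "\<dots> = (\<Sum>m<Suc n. \<Sum>k\<in>{m*p..<m*p+p}. T ?j k)"
    by (rule sum.nat_group[symmetric])
  also have "\<dots> = (\<Sum>m<Suc n. \<Sum>s<p. T ?j (m*p+s))"
  proof (rule sum.cong[OF refl])
    fix m
    have "(\<Sum>k\<in>{0+m*p..<p+m*p}. T ?j k) = (\<Sum>s\<in>{0..<p}. T ?j (s+m*p))"
      by (rule sum.shift_bounds_nat_ivl)
    then show "(\<Sum>k\<in>{m*p..<m*p+p}. T ?j k) = (\<Sum>s<p. T ?j (m*p+s))"
      by (simp add: atLeast0LessThan add.commute)
  qed
  finally have eq: "S ?j = (\<Sum>m<Suc n. \<Sum>s<p. T ?j (m*p+s))" .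
  have "S ?j mod p = (\<Sum>m<Suc n. \<Sum>s<p. T n m * T r s) mod p"
    unfolding eq
  proof (rule sum_mod_cong)
    fix m
    show "(\<Sum>s<p. T ?j (m*p+s)) mod p = (\<Sum>s<p. T n m * T r s) mod p"
    proof (rule sum_mod_cong)
      fix s assume "s \<in> {..<p}"
      then have "s < p" by simp
      then show "T ?j (m*p+s) mod p = T n m * T r s mod p" by (rule T_cong[OF p rp])
    qed
  qed
  also have "(\<Sum>m<Suc n. \<Sum>s<p. T n m * T r s) = (\<Sum>m<Suc n. T n m) * (\<Sum>s<p. T r s)"
    by (rule sum_product[symmetric])
  also have "\<dots> = S n * S r" by (simp only: S_ext[of n "Suc n", OF lessI] S_ext[OF rp])
  finally show ?thesis .
qed

lemma bb_cong:
  fixes p :: nat assumes p: "prime p" and rp: "r < p"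
  shows "bb (n*p+r) mod p = (bb n * bb r) mod p"
proof -
  have c: "(2*(n*p+r) choose n*p+r) mod p = ((2*n choose n) * (2*r choose r)) mod p"
  proof (cases "2*r < p")
    case True
    have e: "2*(n*p+r) = (2*n)*p + 2*r" by (simp add: algebra_simps)
    show ?thesis unfolding e using lucas2[OF p True rp] by simp
  next
    case False
    define t where "t = 2*r - p"
    have tp: "t < p" "t < r" using rp False by (auto simp: t_def)
    have e: "2*(n*p+r) = (2*n+1)*p + t" using False by (simp add: t_def algebra_simps)
    have z: "(t choose r) = 0" using tp by (simp add: binomial_eq_0)
    have "(((2*n+1)*p + t) choose n*p+r) mod p = 0" using lucas2[OF p tp(1) rp, of "2*n+1" n] z by simp
    then have z1: "(2*(n*p+r) choose n*p+r) mod p = 0"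
      unfolding e .
    have e4: "2*r = t + 1*p" using False by (simp add: t_def)
    have "(2*r) mod p = t" unfolding e4 using dm[OF tp(1), of 1] by blast
    then have "(2*r choose r) mod p = 0" using lucas0[OF p rp, of "2*r"] tp by simp
    with z1 show ?thesis by (simp add: mod_mult_right_eq[symmetric])
  qed
  show ?thesis unfolding bb_def
    using mod_mult_cong[OF c S_cong[OF p rp, of n]] by (simp add: algebra_simps)
qed

lemma coeff_a_bb: "coeff_a j = int (bb j)"
  unfolding coeff_a_def bb_def S_def T_def by (simp add: of_nat_sum)

lemma a_cong:
  fixes p :: nat assumes p: "prime p" and rp: "r < p"
  shows "coeff_a (n*p+r) mod int p = (coeff_a n * coeff_a r) mod int p"
proof -
  have "int (bb (n*p+r) mod p) = int ((bb n * bb r) mod p)" using bb_cong[OF p rp] by simp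
  then show ?thesis unfolding coeff_a_bb by (simp add: of_nat_mod)
qed

lemma a0: "coeff_a 0 = 1" unfolding coeff_a_def by simp


lemma coeff_red: "coeff (poly_red p D) n = coeff D n mod int p"
  unfolding poly_red_def by (simp add: coeff_map_poly)

lemma sum_mod_cong_int:
  fixes p :: int
  assumes "\<And>i. i \<in> A \<Longrightarrow> f i mod p = g i mod p"
  shows "sum f A mod p = sum g A mod p"
  by (metis (no_types, lifting) assms mod_sum_eq sum.cong)

lemma red_mult: "poly_red p (D*R) = poly_red p (poly_red p D * poly_red p R)"
proof (rule poly_eqI)
  fix n
  show "coeff (poly_red p (D*R)) n = coeff (poly_red p (poly_red p D * poly_red p R)) n"
    unfolding coeff_red coeff_mult
    by (rule sum_mod_cong_int) (simp add: coeff_red mod_mult_eq)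
qed

lemma unit_of_dvd1:
  assumes p: "prime p" and d: "dvd_mod p D 1"
  shows "unit_mod p D"
proof -
  have p1: "int p > 1" using p prime_gt_1_nat by auto
  obtain R where R: "poly_red p (D*R) = poly_red p 1" using d unfolding dvd_mod_def by blast
  define D' where "D' = poly_red p D"
  define R' where "R' = poly_red p R"
  have R2: "poly_red p (D'*R') = poly_red p 1" using R red_mult unfolding D'_def R'_def by metis
  have c1: "coeff (poly_red p 1) n = (if n = 0 then 1 else 0)" for n
    using p1 by (simp add: coeff_red)
  have D0: "D' \<noteq> 0"
  proof
    assume "D' = 0"
    then have "coeff (poly_red p (D'*R')) 0 = 0" by (simp add: coeff_red)
    then show False using R2 c1[of 0] by simp
  qed
  have R0: "R' \<noteq> 0"
  proof
    assume "R' = 0"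
    then have "coeff (poly_red p (D'*R')) 0 = 0" by (simp add: coeff_red)
    then show False using R2 c1[of 0] by simp
  qed
  have lcD: "\<not> int p dvd lead_coeff D'"
  proof
    assume "int p dvd lead_coeff D'"
    moreover have "lead_coeff D' mod int p = lead_coeff D'" unfolding D'_def coeff_red by simp
    ultimately have "lead_coeff D' = 0" by simp
    then show False using D0 by simp
  qed
  have lcR: "\<not> int p dvd lead_coeff R'"
  proof
    assume "int p dvd lead_coeff R'"
    moreover have "lead_coeff R' mod int p = lead_coeff R'" unfolding R'_def coeff_red by simp
    ultimately have "lead_coeff R' = 0" by simp
    then show False using R0 by simp
  qed
  have pi: "prime (int p)" using p by simp
  have "\<not> int p dvd (lead_coeff D' * lead_coeff R')"
    using lcD lcR prime_dvd_mult_iff[OF pi] by blast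
  then have "coeff (poly_red p (D'*R')) (degree D' + degree R') \<noteq> 0"
    unfolding coeff_red coeff_mult_degree_sum by (simp add: dvd_eq_mod_eq_0)
  then have "degree D' + degree R' = 0" using R2 c1 by (metis zero_neq_one)
  then show ?thesis unfolding unit_mod_def D'_def[symmetric] using D0 by simp
qed


lemma f20_nth: "f20 $ n = coeff_a n" by (simp add: f20_def)

lemma part1:
  assumes p: "prime p"
  shows "fps_red p (Lambda_op p (fps_red p f20)) = fps_red p f20"
proof (rule fps_ext)
  fix n
  have p0: "0 < p" using p prime_gt_0_nat by blast
  have "coeff_a (n*p+0) mod int p = (coeff_a n * coeff_a 0) mod int p" by (rule a_cong[OF p p0])
  then show "fps_red p (Lambda_op p (fps_red p f20)) $ n = fps_red p f20 $ n"
    by (simp add: fps_red_def Lambda_op_def f20_def a0)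
qed

definition Pp :: "nat \<Rightarrow> int poly" where
  "Pp p = Poly (map coeff_a [0..<p])"

lemma coeff_Pp: "coeff (Pp p) i = (if i < p then coeff_a i else 0)"
  unfolding Pp_def by (simp add: nth_default_def)

lemma part2_eq:
  assumes p: "prime p"
  shows "fps_red p f20 = fps_red p (fps_of_poly (Pp p) * subst_pow (p ^ 1) f20)"
proof (rule fps_ext)
  fix n
  have p0: "0 < p" using p prime_gt_0_nat by blast
  have sum: "(\<Sum>i=0..n. coeff (Pp p) i * (if p dvd (n - i) then coeff_a ((n - i) div p) else 0))
      = (\<Sum>i=0..n. if i = n mod p then coeff_a (n mod p) * coeff_a (n div p) else 0)"
  proof (rule sum.cong[OF refl])
    fix i assume i: "i \<in> {0..n}"
    show "coeff (Pp p) i * (if p dvd (n - i) then coeff_a ((n - i) div p) else 0)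
      = (if i = n mod p then coeff_a (n mod p) * coeff_a (n div p) else 0)"
    proof (cases "i = n mod p")
      case True
      have "n - i = (n div p) * p" using True by (simp add: minus_mod_eq_mult_div)
      then show ?thesis using True p0 by (simp add: coeff_Pp)
    next
      case False
      have "\<not> (i < p \<and> p dvd (n - i))"
      proof
        assume h: "i < p \<and> p dvd (n - i)"
        then obtain t where "n - i = p * t" by blast
        then have "n = i + t * p" using i by (simp add: algebra_simps)
        then have "n mod p = i" using h by simp
        then show False using False by simp
      qed
      then show ?thesis using False by (auto simp: coeff_Pp)
    qed
  qed
  have "n mod p \<le> n" by simp
  then have "(\<Sum>i=0..n. if i = n mod p then coeff_a (n mod p) * coeff_a (n div p) else 0)
     = coeff_a (n mod p) * coeff_a (n div p)" by (simp add: sum.delta')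
  moreover have "(fps_of_poly (Pp p) * subst_pow (p ^ 1) f20) $ n = (\<Sum>i=0..n. coeff (Pp p) i * (if p dvd (n - i) then coeff_a ((n - i) div p) else 0))"
    unfolding fps_mult_nth subst_pow_def fps_nth_Abs_fps f20_nth power_one_right by simp
  moreover have "coeff_a (n div p * p + n mod p) mod int p = (coeff_a (n div p) * coeff_a (n mod p)) mod int p"
    by (rule a_cong[OF p]) (simp add: p0)
  ultimately show "fps_red p f20 $ n = fps_red p (fps_of_poly (Pp p) * subst_pow (p ^ 1) f20) $ n"
    by (simp add: fps_red_def sum mult.commute f20_nth)
qed

lemma part2:
  "in_L {p. prime p} f20"
  unfolding in_L_def
proof (intro conjI exI[of _ "1::real"] ballI)
  show "f20 $ 0 = 1" by (simp add: f20_nth a0)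
  show "(0::real) < 1" by simp
  fix p :: nat assume "p \<in> {p. prime p}"
  then have p: "prime p" by simp
  have p1: "int p > 1" using p prime_gt_1_nat by auto
  show "\<exists>l>0. \<exists>P Q A. poly_red p Q \<noteq> 0 \<and> coprime_mod p P Q \<and>
              fps_red p (fps_of_poly Q * A) = fps_red p (fps_of_poly P) \<and>
              fps_red p f20 = fps_red p (A * subst_pow (p ^ l) f20) \<and>
              real (max (degree (poly_red p P)) (degree (poly_red p Q))) \<le> 1 * real p ^ l"
  proof (rule exI[of _ "1::nat"], rule conjI[OF zero_less_one], rule exI[of _ "Pp p"], rule exI[of _ "1::int poly"], rule exI[of _ "fps_of_poly (Pp p)"], intro conjI)
    show "poly_red p 1 \<noteq> 0"
    proof
      assume "poly_red p 1 = 0"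
      then have "coeff (poly_red p 1) 0 = 0" by simp
      then show False using p1 by (simp add: coeff_red)
    qed
    show "coprime_mod p (Pp p) 1" unfolding coprime_mod_def using unit_of_dvd1[OF p] by blast
    show "fps_red p (fps_of_poly 1 * fps_of_poly (Pp p)) = fps_red p (fps_of_poly (Pp p))" by simp
    show "fps_red p f20 = fps_red p (fps_of_poly (Pp p) * subst_pow (p ^ 1) f20)" by (rule part2_eq[OF p])
    have d1: "degree (poly_red p (Pp p)) \<le> p"
    proof (rule degree_le, intro allI impI)
      fix i assume "p < i" then show "coeff (poly_red p (Pp p)) i = 0" by (simp add: coeff_red coeff_Pp)
    qed
    have d2: "degree (poly_red p 1) \<le> 0"
    proof (rule degree_le, intro allI impI)
      fix i :: nat assume "0 < i" then show "coeff (poly_red p 1) i = 0" by (simp add: coeff_red)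
    qed
    show "real (max (degree (poly_red p (Pp p))) (degree (poly_red p 1))) \<le> 1 * real p ^ 1"
      using d1 d2 by simp
  qed
qed

theorem mainTheorem20:
  shows "(\<forall>p::nat. prime p \<longrightarrow> fps_red p (Lambda_op p (fps_red p f20)) = fps_red p f20)
    \<and> (\<exists>J::nat set. finite J \<and> (\<forall>q\<in>J. prime q) \<and> in_L ({p. prime p} - J) f20)"
  using part1 part2 by (intro conjI allI impI exI[of _ "{}"]) auto

end
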